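(* Let $\mathcal C\subseteq\{0,1\}^K$ be a nonempty binary CW code of length $K$ and weight $\omega$ (not necessarily full). Then for every observation vector $\mathbf r\in\mathbb Z_{\ge0}^K$, every CSI $(\bar c_{\mathrm s},\bar c_{\mathrm n})\in(0,\infty)^2$ and every probability density $f_{\bar{\mathbf c}}$ on $(0,\infty)^2$, the set of coherent ML solutions $\arg\max_{\mathbf s\in\mathcal C} f_{\mathbf r}(\mathbf r\mid\bar{\mathbf c},\mathbf s)$ and the set of non-coherent ML solutions $\arg\max_{\mathbf s\in\mathcal C}\int\!\!\int f_{\mathbf r}(\mathbf r\mid\bar{\mathbf c},\mathbf s)f_{\bar{\mathbf c}}(\bar c_{\mathrm s},\bar c_{\mathrm n})\,\mathrm d\bar c_{\mathrm s}\,\mathrm d\bar c_{\mathrm n}$ are both equal to $\arg\max_{\mathbf s\in\mathcal C}\sum_{k=1}^K s[k]\,r[k]$; in particular they require neither instantaneous nor statistical CSI.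
   Context: Channel model: given CSI $\bar{\mathbf c}=(\bar c_{\mathrm s},\bar c_{\mathrm n})$ with $\bar c_{\mathrm s},\bar c_{\mathrm n}>0$ and a transmitted codeword $\mathbf s=[s[1],\dots,s[K]]^{\mathsf T}$, the observations $r[1],\dots,r[K]$ are independent with $r[k]$ Poisson of mean $s[k]\bar c_{\mathrm s}+\bar c_{\mathrm n}$, so $f_{\mathbf r}(\mathbf r\mid\bar{\mathbf c},\mathbf s)=\prod_{k=1}^K \frac{(\bar c_{\mathrm s}s[k]+\bar c_{\mathrm n})^{r[k]}e^{-\bar c_{\mathrm s}s[k]-\bar c_{\mathrm n}}}{r[k]!}$. A binary CW code of length $K$ and weight $\omega$ is a codebook $\mathcal C\subseteq\{0,1\}^K$ in which every codeword has exactly $\omega$ entries equal to $1$. *)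

theory Defs
  imports "HOL-Analysis.Analysis"
begin

text \<open>Vectors of length K are lists of length K; entry k (1-based in the paper) is xs ! (k-1).\<close>

definition is_CW_code :: "nat \<Rightarrow> nat \<Rightarrow> nat list set \<Rightarrow> bool" where
  "is_CW_code K \<omega> C \<longleftrightarrow>
     (\<forall>s\<in>C. length s = K \<and> set s \<subseteq> {0, 1} \<and> length (filter (\<lambda>x. x = 1) s) = \<omega>)"

definition lik :: "nat list \<Rightarrow> real \<Rightarrow> real \<Rightarrow> nat list \<Rightarrow> real" where
  "lik r cs cn s = (\<Prod>k<length r.
      (cs * real (s ! k) + cn) ^ (r ! k) * exp (- cs * real (s ! k) - cn) / fact (r ! k))"

definition noncoh_lik :: "nat list \<Rightarrow> (real \<times> real \<Rightarrow> real) \<Rightarrow> nat list \<Rightarrow> real" where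
  "noncoh_lik r f s = (LINT c : {0<..} \<times> {0<..} | lborel. lik r (fst c) (snd c) s * f c)"

definition is_density_pos2 :: "(real \<times> real \<Rightarrow> real) \<Rightarrow> bool" where
  "is_density_pos2 f \<longleftrightarrow> f \<in> borel_measurable borel \<and>
     (\<forall>c \<in> {0<..} \<times> {0<..}. f c \<ge> 0) \<and>
     set_integrable lborel ({0<..} \<times> {0<..}) f \<and>
     (LINT c : ({0<..} \<times> {0<..}) | lborel. f c) = (1::real)"

definition arg_max_on :: "('a \<Rightarrow> real) \<Rightarrow> 'a set \<Rightarrow> 'a set" where
  "arg_max_on g C = {s \<in> C. \<forall>s'\<in>C. g s' \<le> g s}"

definition corr :: "nat list \<Rightarrow> nat list \<Rightarrow> real" where
  "corr r s = (\<Sum>k<length r. real (s ! k) * real (r ! k))"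

end

theory Submission
  imports Defs
begin

lemma pow_fact_le_exp: "(x::real) \<ge> 0 \<Longrightarrow> x ^ n / fact n \<le> exp x"
proof -
  assume x: "x \<ge> 0"
  have s: "(\<lambda>n. x ^ n / fact n) sums exp x" using exp_converges[of x] by (simp add: divide_inverse mult.commute scaleR_conv_of_real)
  have "sum (\<lambda>n. x ^ n / fact n) {n} \<le> suminf (\<lambda>n. x ^ n / fact n)"
    by (rule sum_le_suminf) (use s x in \<open>auto simp: sums_iff\<close>)
  then show ?thesis using s by (simp add: sums_iff)
qed

lemma pois_le1: "(x::real) \<ge> 0 \<Longrightarrow> x ^ n * exp (- x) / fact n \<le> 1"
proof -
  assume x: "x \<ge> 0"
  have "x ^ n / fact n \<le> exp x" using pow_fact_le_exp[OF x] .
  hence "x ^ n / fact n * exp (-x) \<le> exp x * exp (-x)" by (rule mult_right_mono) (rule less_imp_le, rule exp_gt_zero)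
  moreover have "x ^ n * exp (- x) / fact n = x ^ n / fact n * exp (-x)" by (rule times_divide_eq_left[symmetric])
  moreover have "exp x * exp (-x) = 1" by (simp add: exp_minus_inverse)
  ultimately show ?thesis by linarith
qed

lemma lik_bounds:
  assumes "cs \<ge> 0" "cn \<ge> 0"
  shows "0 \<le> lik r cs cn s \<and> lik r cs cn s \<le> 1"
proof -
  have "0 \<le> lik r cs cn s" unfolding lik_def using assms by (auto intro!: prod_nonneg)
  moreover have "lik r cs cn s \<le> 1" unfolding lik_def
  proof (intro prod_le_1 conjI)
    fix k assume "k \<in> {..<length r}"
    have "0 \<le> cs * real (s!k) + cn" using assms by simp
    have e: "exp (- cs * real (s ! k) - cn) = exp (- (cs * real (s ! k) + cn))"
      by (rule arg_cong[where f=exp]) simp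
    from pois_le1[OF \<open>0 \<le> cs * real (s!k) + cn\<close>, of "r!k"]
    show "(cs * real (s ! k) + cn) ^ r ! k * exp (- cs * real (s ! k) - cn) / fact (r ! k) \<le> 1"
      by (simp only: e)
  next
    fix k assume "k \<in> {..<length r}"
    have "0 \<le> cs * real (s!k) + cn" using assms by simp
    thus "0 \<le> (cs * real (s ! k) + cn) ^ r ! k * exp (- cs * real (s ! k) - cn) / fact (r ! k)"
      by simp
  qed
  ultimately show ?thesis by simp
qed

lemma sum_list_01: "set s \<subseteq> {0,1} \<Longrightarrow> sum_list s = length (filter (\<lambda>x. x = (1::nat)) s)"
  by (induction s) auto

lemma factor_form:
  assumes "x \<in> {0,1::nat}" "cs > 0" "cn > 0"
  shows "(cs * real x + cn) ^ n * exp (- cs * real x - cn) / fact n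
      = cn ^ n * exp (- cn) / fact n * exp (real x * (real n * ln ((cs + cn) / cn) - cs))"
proof (cases "x = 0")
  case True then show ?thesis by simp
next
  case False
  hence x: "x = 1" using assms by auto
  have "exp (real n * ln ((cs + cn) / cn)) = ((cs+cn)/cn) ^ n"
    using assms by (subst exp_of_nat_mult) simp
  hence "(cs + cn) ^ n = cn ^ n * exp (real n * ln ((cs + cn) / cn))"
    using assms by (simp add: power_divide)
  thus ?thesis using x by (simp add: exp_diff exp_minus field_simps)
qed

lemma lik_form:
  assumes "cs > 0" "cn > 0" "length s = length r" "set s \<subseteq> {0,1}"
    "length (filter (\<lambda>x. x = 1) s) = w"
  shows "lik r cs cn s = (\<Prod>k<length r. cn ^ (r!k) * exp (- cn) / fact (r!k))
          * exp (ln ((cs + cn) / cn) * corr r s - cs * real w)"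
proof -
  define L where "L = ln ((cs + cn) / cn)"
  have in01: "s ! k \<in> {0,1}" if "k < length r" for k
  proof -
    have "k < length s" using that assms(3) by simp
    hence "s ! k \<in> set s" by (rule nth_mem)
    thus ?thesis using assms(4) by blast
  qed
  have "lik r cs cn s = (\<Prod>k<length r. cn ^ (r!k) * exp (- cn) / fact (r!k)
       * exp (real (s!k) * (real (r!k) * L - cs)))"
    unfolding lik_def L_def
  proof (rule prod.cong[OF refl])
    fix k assume "k \<in> {..<length r}"
    hence "k < length r" by simp
    show "(cs * real (s ! k) + cn) ^ r ! k * exp (- cs * real (s ! k) - cn) / fact (r ! k) =
         cn ^ r ! k * exp (- cn) / fact (r ! k) * exp (real (s ! k) * (real (r ! k) * ln ((cs + cn) / cn) - cs))"
      by (rule factor_form[OF in01[OF \<open>k < length r\<close>] assms(1,2)])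
  qed
  also have "\<dots> = (\<Prod>k<length r. cn ^ (r!k) * exp (- cn) / fact (r!k))
       * (\<Prod>k<length r. exp (real (s!k) * (real (r!k) * L - cs)))"
    by (rule prod.distrib)
  also have "(\<Prod>k<length r. exp (real (s!k) * (real (r!k) * L - cs)))
       = exp (\<Sum>k<length r. real (s!k) * (real (r!k) * L - cs))"
    by (rule exp_sum[symmetric]) simp
  also have "(\<Sum>k<length r. real (s!k) * (real (r!k) * L - cs))
      = (\<Sum>k<length r. L * (real (s!k) * real (r!k)) - cs * real (s!k))"
    by (rule sum.cong[OF refl]) (simp only: right_diff_distrib mult.commute mult.left_commute)
  also have "\<dots> = L * corr r s - cs * (\<Sum>k<length r. real (s!k))"
    unfolding corr_def by (simp only: sum_subtractf sum_distrib_left)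
  also have "(\<Sum>k<length r. real (s!k)) = real w"
  proof -
    have "(\<Sum>k<length r. real (s!k)) = real (\<Sum>k<length s. s!k)" using assms(3) by simp
    also have "(\<Sum>k<length s. s!k) = sum_list s" by (simp add: sum_list_sum_nth atLeast0LessThan)
    also have "\<dots> = w" using sum_list_01[OF assms(4)] assms(5) by simp
    finally show ?thesis .
  qed
  finally show ?thesis unfolding L_def .
qed

lemma argmax_eq:
  assumes "\<And>s s'. s \<in> C \<Longrightarrow> s' \<in> C \<Longrightarrow> (g s' \<le> g s \<longleftrightarrow> h s' \<le> h s)"
  shows "arg_max_on g C = arg_max_on h C"
  unfolding arg_max_on_def using assms by blast

lemma lik_mono:
  assumes "cs > 0" "cn > 0" "length s = length r" "set s \<subseteq> {0,1}"
    "length (filter (\<lambda>x. x = 1) s) = w"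
    "length s' = length r" "set s' \<subseteq> {0,1}"
    "length (filter (\<lambda>x. x = 1) s') = w"
  shows "(lik r cs cn s' \<le> lik r cs cn s \<longleftrightarrow> corr r s' \<le> corr r s)"
    "(lik r cs cn s' < lik r cs cn s \<longleftrightarrow> corr r s' < corr r s)"
proof -
  define P where "P = (\<Prod>k<length r. cn ^ (r!k) * exp (- cn) / fact (r!k))"
  define L where "L = ln ((cs + cn) / cn)"
  have P: "P > 0" unfolding P_def using assms by (intro prod_pos) auto
  have "(cs + cn) / cn > 1" using assms by simp
  hence L: "L > 0" unfolding L_def by simp
  have e1: "lik r cs cn s = P * exp (L * corr r s - cs * real w)"
    unfolding P_def L_def by (rule lik_form) (use assms in auto)
  have e2: "lik r cs cn s' = P * exp (L * corr r s' - cs * real w)"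
    unfolding P_def L_def by (rule lik_form) (use assms in auto)
  show "(lik r cs cn s' \<le> lik r cs cn s \<longleftrightarrow> corr r s' \<le> corr r s)"
    unfolding e1 e2 mult_le_cancel_left_pos[OF P] exp_le_cancel_iff
    using mult_le_cancel_left_pos[OF L, of "corr r s'" "corr r s"] by linarith
  show "(lik r cs cn s' < lik r cs cn s \<longleftrightarrow> corr r s' < corr r s)"
    unfolding e1 e2 mult_less_cancel_left_pos[OF P] exp_less_cancel_iff
    using mult_less_cancel_left_pos[OF L, of "corr r s'" "corr r s"] by linarith
qed

theorem corollary1:
  fixes K \<omega> :: nat and C :: "nat list set" and r :: "nat list"
    and cs cn :: real and f :: "real \<times> real \<Rightarrow> real"
  assumes "is_CW_code K \<omega> C" and "C \<noteq> {}"
    and "length r = K"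
    and "cs > 0" and "cn > 0"
    and "is_density_pos2 f"
  shows "arg_max_on (lik r cs cn) C = arg_max_on (corr r) C
       \<and> arg_max_on (noncoh_lik r f) C = arg_max_on (corr r) C"
proof -
  have cw: "\<And>s. s \<in> C \<Longrightarrow> length s = length r \<and> set s \<subseteq> {0,1} \<and> length (filter (\<lambda>x. x = 1) s) = \<omega>"
    using assms(1,3) unfolding is_CW_code_def by auto
  have part1: "arg_max_on (lik r cs cn) C = arg_max_on (corr r) C"
  proof (rule argmax_eq)
    fix s s' assume "s \<in> C" "s' \<in> C"
    thus "(lik r cs cn s' \<le> lik r cs cn s) = (corr r s' \<le> corr r s)"
      using cw[of s] cw[of s'] lik_mono(1)[OF assms(4,5), of s r \<omega> s'] by simp
  qed
  define D where "D = ({0<..} \<times> {0<..} :: (real \<times> real) set)"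
  have fm: "f \<in> borel_measurable borel" and fnn: "\<And>c. c \<in> D \<Longrightarrow> f c \<ge> 0"
    and fint: "set_integrable lborel D f" and f1: "(LINT c : D | lborel. f c) = 1"
  proof -
    have d: "f \<in> borel_measurable borel \<and> (\<forall>c\<in>D. f c \<ge> 0) \<and> set_integrable lborel D f
       \<and> (LINT c : D | lborel. f c) = 1"
      using assms(6) unfolding is_density_pos2_def D_def .
    show "f \<in> borel_measurable borel" using d by blast
    show "\<And>c. c \<in> D \<Longrightarrow> f c \<ge> 0" using d by blast
    show "set_integrable lborel D f" using d by blast
    show "(LINT c : D | lborel. f c) = 1" using d by blast
  qed
  have fml: "f \<in> borel_measurable lborel" using fm by (simp add: measurable_cong_sets[OF sets_lborel refl])
  have Dm: "D \<in> sets lborel" unfolding D_def by (simp add: borel_open open_Times)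
  have likm: "(\<lambda>c. lik r (fst c) (snd c) s) \<in> borel_measurable lborel" for s
  proof -
    have "(\<lambda>c. lik r (fst c) (snd c) s) \<in> borel_measurable borel"
      unfolding lik_def
      by (intro borel_measurable_continuous_onI continuous_intros) auto
    thus ?thesis by (simp add: measurable_cong_sets[OF sets_lborel refl])
  qed
  have integ: "set_integrable lborel D (\<lambda>c. lik r (fst c) (snd c) s * f c)" for s
  proof (rule set_integrable_bound[OF fint])
    show "set_borel_measurable lborel D (\<lambda>c. lik r (fst c) (snd c) s * f c)"
      unfolding set_borel_measurable_def using likm fml Dm
      by (intro borel_measurable_scaleR borel_measurable_indicator borel_measurable_times)
    show "AE x\<in>D in lborel. norm (lik r (fst x) (snd x) s * f x) \<le> norm (f x)"
    proof (rule AE_I2, rule impI)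
      fix x assume "x \<in> D"
      hence "fst x \<ge> 0" "snd x \<ge> 0" "f x \<ge> 0" using fnn unfolding D_def by auto
      have b: "0 \<le> lik r (fst x) (snd x) s" "lik r (fst x) (snd x) s \<le> 1"
        using lik_bounds[OF \<open>fst x \<ge> 0\<close> \<open>snd x \<ge> 0\<close>, of r s] by auto
      have "lik r (fst x) (snd x) s * f x \<le> 1 * f x"
        using b \<open>f x \<ge> 0\<close> by (intro mult_right_mono) auto
      thus "norm (lik r (fst x) (snd x) s * f x) \<le> norm (f x)"
        using b \<open>f x \<ge> 0\<close> by simp
    qed
  qed
  have nl: "noncoh_lik r f s = (LINT c : D | lborel. lik r (fst c) (snd c) s * f c)" for s
    unfolding noncoh_lik_def D_def ..
  have mono_le: "noncoh_lik r f s' \<le> noncoh_lik r f s"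
    if "s \<in> C" "s' \<in> C" "corr r s' \<le> corr r s" for s s'
    unfolding nl
  proof (rule set_integral_mono[OF integ integ])
    fix c assume c: "c \<in> D"
    hence "fst c > 0" "snd c > 0" unfolding D_def by auto
    hence "lik r (fst c) (snd c) s' \<le> lik r (fst c) (snd c) s"
      using lik_mono(1)[of "fst c" "snd c" s r \<omega> s'] cw[of s] cw[of s'] that by simp
    thus "lik r (fst c) (snd c) s' * f c \<le> lik r (fst c) (snd c) s * f c"
      using fnn[OF c] by (rule mult_right_mono)
  qed
  have mono_less: "noncoh_lik r f s' < noncoh_lik r f s"
    if "s \<in> C" "s' \<in> C" "corr r s' < corr r s" for s s'
  proof -
    define g where "g c = (lik r (fst c) (snd c) s - lik r (fst c) (snd c) s') * f c" for c
    have gpos: "lik r (fst c) (snd c) s' < lik r (fst c) (snd c) s" if "c \<in> D" for c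
    proof -
      from that have "fst c > 0" "snd c > 0" unfolding D_def by auto
      thus ?thesis using lik_mono(2)[of "fst c" "snd c" s r \<omega> s'] cw[of s] cw[of s'] \<open>s \<in> C\<close> \<open>s' \<in> C\<close> \<open>corr r s' < corr r s\<close> by simp
    qed
    have gint: "set_integrable lborel D g"
      unfolding g_def left_diff_distrib by (rule set_integral_diff(1)[OF integ integ])
    have diff: "noncoh_lik r f s - noncoh_lik r f s' = (LINT c : D | lborel. g c)"
      unfolding nl g_def left_diff_distrib by (rule set_integral_diff(2)[OF integ integ, symmetric])
    have gnn: "\<And>c. c \<in> D \<Longrightarrow> g c \<ge> 0" unfolding g_def using gpos fnn
      by (simp add: less_imp_le)
    have "(LINT c : D | lborel. g c) \<noteq> 0"
    proof
      assume z: "(LINT c : D | lborel. g c) = 0"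
      have i: "integrable lborel (\<lambda>c. indicator D c *\<^sub>R g c)"
        using gint unfolding set_integrable_def .
      have nn: "AE c in lborel. 0 \<le> indicator D c *\<^sub>R g c"
        by (rule AE_I2) (simp add: indicator_def gnn)
      have "AE c in lborel. indicator D c *\<^sub>R g c = 0"
        using z integral_nonneg_eq_0_iff_AE[OF i nn] unfolding set_lebesgue_integral_def
        by blast
      hence "AE c in lborel. indicator D c *\<^sub>R f c = 0"
      proof (rule AE_mp, intro AE_I2 impI)
        fix c assume a: "indicator D c *\<^sub>R g c = 0"
        show "indicator D c *\<^sub>R f c = 0"
        proof (cases "c \<in> D")
          case True
          hence "g c = 0" using a by simp
          moreover have "lik r (fst c) (snd c) s - lik r (fst c) (snd c) s' \<noteq> 0"
            using gpos[OF True] by simp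
          ultimately have "f c = 0" unfolding g_def by simp
          thus ?thesis by simp
        qed simp
      qed
      hence "(LINT c : D | lborel. f c) = 0"
        unfolding set_lebesgue_integral_def by (simp add: integral_eq_zero_AE)
      thus False using f1 by simp
    qed
    moreover have "(LINT c : D | lborel. g c) \<ge> 0"
      unfolding set_lebesgue_integral_def
      by (intro integral_nonneg_AE AE_I2) (simp add: indicator_def gnn)
    ultimately show ?thesis using diff by linarith
  qed
  have part2: "arg_max_on (noncoh_lik r f) C = arg_max_on (corr r) C"
  proof (rule argmax_eq)
    fix s s' assume "s \<in> C" "s' \<in> C"
    thus "(noncoh_lik r f s' \<le> noncoh_lik r f s) = (corr r s' \<le> corr r s)"
      using mono_le[of s s'] mono_less[of s' s] by (meson not_le)
  qed
  show ?thesis using part1 part2 by simp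
qed

end
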